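(* Let $p\ge2$ be an even integer and let $\mu\in P_p(\mathbb{R}^d)$ be a probabilistic $p$-frame for $\mathbb{R}^d$. Then $$PFP_p(\mu)\ \ge\ \frac{(p-1)(p-3)\cdots1}{(d+p-2)(d+p-4)\cdots d}\Big(\int_{\mathbb{R}^d}\|x\|^p\,d\mu(x)\Big)^2,$$ with equality if and only if $\mu$ is a tight probabilistic $p$-frame.
   Context: $P_p(\mathbb{R}^d)$ is the set of Borel probability measures on $\mathbb{R}^d$ with finite $p$-th moment. $PFP_p(\mu)=\iint|\langle x,y\rangle|^p\,d\mu(x)\,d\mu(y)$. A probability measure $\mu$ is a probabilistic $p$-frame if there exist $0<A\le B<\infty$ with $A\|y\|^p\le\int|\langle x,y\rangle|^p\,d\mu(x)\le B\|y\|^p$ for all $y\in\mathbb{R}^d$; it is a tight probabilistic $p$-frame if this holds with $A=B$. *)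

theory Defs
  imports "HOL-Probability.Probability"
begin

definition Pp :: "nat \<Rightarrow> 'a::euclidean_space measure \<Rightarrow> bool" where
  "Pp p M \<longleftrightarrow> prob_space M \<and> sets M = sets borel \<and> integrable M (\<lambda>x. norm x ^ p)"

definition PFP :: "nat \<Rightarrow> 'a::euclidean_space measure \<Rightarrow> real" where
  "PFP p M = (LINT x|M. (LINT y|M. \<bar>x \<bullet> y\<bar> ^ p))"

definition prob_p_frame :: "nat \<Rightarrow> 'a::euclidean_space measure \<Rightarrow> bool" where
  "prob_p_frame p M \<longleftrightarrow> prob_space M \<and> sets M = sets borel \<and>
     (\<exists>A B. 0 < A \<and> A \<le> B \<and>
        (\<forall>y. A * norm y ^ p \<le> (LINT x|M. \<bar>x \<bullet> y\<bar> ^ p) \<and>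
             (LINT x|M. \<bar>x \<bullet> y\<bar> ^ p) \<le> B * norm y ^ p))"

definition tight_prob_p_frame :: "nat \<Rightarrow> 'a::euclidean_space measure \<Rightarrow> bool" where
  "tight_prob_p_frame p M \<longleftrightarrow> prob_space M \<and> sets M = sets borel \<and>
     (\<exists>A. 0 < A \<and> (\<forall>y. (LINT x|M. \<bar>x \<bullet> y\<bar> ^ p) = A * norm y ^ p))"

text \<open>(p-1)(p-3)...1 / ((d+p-2)(d+p-4)...d) for p = 2k, d = dimension.\<close>
definition frame_const :: "nat \<Rightarrow> nat \<Rightarrow> real" where
  "frame_const p d = (\<Prod>j<p div 2. real (2*j+1) / real (d + 2*j))"

end

theory Submission
  imports Defs "HOL-Computational_Algebra.Polynomial"
begin


definition VV :: "'a \<Rightarrow> 'a \<Rightarrow> 'a::euclidean_space \<Rightarrow> 'a" where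
  "VV a b x = (x \<bullet> a) *\<^sub>R b - (x \<bullet> b) *\<^sub>R a"

definition slot :: "nat \<Rightarrow> nat \<Rightarrow> 'a \<Rightarrow> 'a \<Rightarrow> 'a" where
  "slot k l v x = (if l = k then v else x)"

definition Fe :: "nat \<Rightarrow> 'a \<Rightarrow> 'a \<Rightarrow> (nat \<Rightarrow> 'a) \<Rightarrow> 'a::euclidean_space \<Rightarrow> real" where
  "Fe m a b i x = (\<Sum>k<m. \<Prod>l<m. slot k l (VV a b x) x \<bullet> i l)"

lemma B1:
  fixes X Y :: "nat \<Rightarrow> 'a::euclidean_space"
  shows "(\<Sum>i\<in>PiE {..<m} (\<lambda>_. Basis). (\<Prod>l<m. X l \<bullet> i l) * (\<Prod>l<m. Y l \<bullet> i l))
        = (\<Prod>l<m. X l \<bullet> Y l)"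
proof -
  have "(\<Sum>i\<in>PiE {..<m} (\<lambda>_. Basis). (\<Prod>l<m. X l \<bullet> i l) * (\<Prod>l<m. Y l \<bullet> i l))
      = (\<Sum>i\<in>PiE {..<m} (\<lambda>_. Basis). \<Prod>l<m. (X l \<bullet> i l) * (Y l \<bullet> i l))"
    by (simp add: prod.distrib)
  also have "\<dots> = (\<Prod>l<m. \<Sum>c\<in>Basis. (X l \<bullet> c) * (Y l \<bullet> c))"
    by (rule prod_sum_PiE[symmetric]) auto
  also have "\<dots> = (\<Prod>l<m. X l \<bullet> Y l)"
    by (simp add: euclidean_inner[symmetric])
  finally show ?thesis .
qed

lemma B2:
  fixes x y vx vy :: "'a::euclidean_space"
  shows "(\<Sum>i\<in>PiE {..<m} (\<lambda>_. Basis). (\<Sum>k<m. \<Prod>l<m. slot k l vx x \<bullet> i l) * (\<Sum>k<m. \<Prod>l<m. slot k l vy y \<bullet> i l))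
   = (\<Sum>k<m. \<Sum>k'<m. \<Prod>l<m. slot k l vx x \<bullet> slot k' l vy y)"
proof -
  have "(\<Sum>i\<in>PiE {..<m} (\<lambda>_. Basis). (\<Sum>k<m. \<Prod>l<m. slot k l vx x \<bullet> i l) * (\<Sum>k<m. \<Prod>l<m. slot k l vy y \<bullet> i l))
     = (\<Sum>i\<in>PiE {..<m} (\<lambda>_. Basis). \<Sum>k<m. \<Sum>k'<m. (\<Prod>l<m. slot k l vx x \<bullet> i l) * (\<Prod>l<m. slot k' l vy y \<bullet> i l))"
    by (simp add: sum_product)
  also have "\<dots> = (\<Sum>k<m. \<Sum>k'<m. \<Sum>i\<in>PiE {..<m} (\<lambda>_. Basis). (\<Prod>l<m. slot k l vx x \<bullet> i l) * (\<Prod>l<m. slot k' l vy y \<bullet> i l))"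
    by (subst sum.swap, rule sum.cong, simp, subst sum.swap, simp)
  also have "\<dots> = (\<Sum>k<m. \<Sum>k'<m. \<Prod>l<m. slot k l vx x \<bullet> slot k' l vy y)"
    by (simp add: B1)
  finally show ?thesis .
qed

lemma B3:
  fixes x y vx vy :: "'a::euclidean_space"
  assumes "k < m" "k' < m"
  shows "(\<Prod>l<m. slot k l vx x \<bullet> slot k' l vy y) =
     (if k = k' then (vx \<bullet> vy) * (x \<bullet> y) ^ (m - 1) else (vx \<bullet> y) * (x \<bullet> vy) * (x \<bullet> y) ^ (m - 2))"
proof (cases "k = k'")
  case True
  have "(\<Prod>l<m. slot k l vx x \<bullet> slot k' l vy y) = (vx \<bullet> vy) * (\<Prod>l\<in>{..<m}-{k}. slot k l vx x \<bullet> slot k' l vy y)"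
    using assms True by (subst prod.remove[of _ k]) (auto simp: slot_def)
  also have "(\<Prod>l\<in>{..<m}-{k}. slot k l vx x \<bullet> slot k' l vy y) = (\<Prod>l\<in>{..<m}-{k}. x \<bullet> y)"
    using True by (intro prod.cong) (auto simp: slot_def)
  also have "\<dots> = (x \<bullet> y) ^ (m - 1)" using assms by simp
  finally show ?thesis using True by simp
next
  case False
  have "(\<Prod>l<m. slot k l vx x \<bullet> slot k' l vy y) = (vx \<bullet> y) * (\<Prod>l\<in>{..<m}-{k}. slot k l vx x \<bullet> slot k' l vy y)"
    using assms False by (subst prod.remove[of _ k]) (auto simp: slot_def)
  also have "(\<Prod>l\<in>{..<m}-{k}. slot k l vx x \<bullet> slot k' l vy y) = (x \<bullet> vy) * (\<Prod>l\<in>{..<m}-{k}-{k'}. slot k l vx x \<bullet> slot k' l vy y)"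
    using assms False by (subst prod.remove[of _ k']) (auto simp: slot_def)
  also have "(\<Prod>l\<in>{..<m}-{k}-{k'}. slot k l vx x \<bullet> slot k' l vy y) = (\<Prod>l\<in>{..<m}-{k}-{k'}. x \<bullet> y)"
    by (intro prod.cong) (auto simp: slot_def)
  also have "\<dots> = (x \<bullet> y) ^ (m - 2)" using assms False by (simp add: card_Diff_subset numeral_2_eq_2)
  finally show ?thesis using False by simp
qed

lemma B4:
  fixes \<alpha> \<beta> :: real and m :: nat
  shows "(\<Sum>k<m. \<Sum>k'<m. if k = k' then \<alpha> else \<beta>) = m * \<alpha> + m * (m - 1) * \<beta>"
proof -
  have "(\<Sum>k'<m. if k = k' then \<alpha> else \<beta>) = m * \<beta> + (\<alpha> - \<beta>)" if "k < m" for k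
  proof -
    have "(\<Sum>k'<m. if k = k' then \<alpha> else \<beta>) = (\<Sum>k'<m. \<beta> + (if k = k' then \<alpha> - \<beta> else 0))"
      by (rule sum.cong) auto
    also have "\<dots> = m * \<beta> + (\<alpha> - \<beta>)" using that by (simp add: sum.distrib sum.delta sum.delta')
    finally show ?thesis .
  qed
  hence "(\<Sum>k<m. \<Sum>k'<m. if k = k' then \<alpha> else \<beta>) = (\<Sum>k<m. m * \<beta> + (\<alpha> - \<beta>))"
    by (intro sum.cong) auto
  also have "\<dots> = m * \<alpha> + m * (m - 1) * \<beta>"
    by (cases m) (auto simp: algebra_simps of_nat_diff)
  finally show ?thesis .
qed

lemma B5a:
  fixes x y :: "'a::euclidean_space"
  shows "(\<Sum>a\<in>Basis. \<Sum>b\<in>Basis. VV a b x \<bullet> VV a b y) = 2 * (real DIM('a) - 1) * (x \<bullet> y)"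
proof -
  have e: "VV a b x \<bullet> VV a b y = (x\<bullet>a)*(y\<bullet>a) + (x\<bullet>b)*(y\<bullet>b) - 2*(if b = a then (x\<bullet>a)*(y\<bullet>a) else 0)"
    if "a \<in> Basis" "b \<in> Basis" for a b
    using that by (auto simp: VV_def inner_diff_left inner_diff_right inner_Basis algebra_simps inner_commute)
  have "(\<Sum>a\<in>Basis. \<Sum>b\<in>Basis. VV a b x \<bullet> VV a b y)
     = (\<Sum>a\<in>Basis. \<Sum>b\<in>Basis. (x\<bullet>a)*(y\<bullet>a) + (x\<bullet>b)*(y\<bullet>b) - 2*(if b = a then (x\<bullet>a)*(y\<bullet>a) else 0))"
    by (intro sum.cong refl) (simp add: e)
  also have "\<dots> = (\<Sum>a\<in>Basis. real DIM('a) * ((x\<bullet>a)*(y\<bullet>a)) + (x \<bullet> y) - 2*((x\<bullet>a)*(y\<bullet>a)))"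
    by (intro sum.cong refl) (simp add: sum.distrib sum_subtractf sum.delta euclidean_inner[symmetric] sum_distrib_left[symmetric])
  also have "\<dots> = real DIM('a) * (x\<bullet>y) + real DIM('a) * (x \<bullet> y) - 2 * (x \<bullet> y)"
    by (simp add: sum.distrib sum_subtractf euclidean_inner[symmetric] sum_distrib_left[symmetric])
  finally show ?thesis by (simp add: algebra_simps)
qed

lemma B5b:
  fixes x y :: "'a::euclidean_space"
  shows "(\<Sum>a\<in>Basis. \<Sum>b\<in>Basis. (VV a b x \<bullet> y) * (x \<bullet> VV a b y)) = 2 * (x \<bullet> y)^2 - 2 * (norm x)^2 * (norm y)^2"
proof -
  have nx: "(norm x)^2 = (\<Sum>a\<in>Basis. (x\<bullet>a)^2)" for x :: 'a
    unfolding power2_norm_eq_inner by (subst euclidean_inner) (simp add: power2_eq_square)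
  have sp: "\<And>F G. (\<Sum>a\<in>Basis. \<Sum>b\<in>Basis. F a * G b) = (\<Sum>a\<in>(Basis::'a set). F a) * (\<Sum>b\<in>Basis. G b :: real)"
    by (simp add: sum_product)
  have e: "(VV a b x \<bullet> y) * (x \<bullet> VV a b y) = 2 * ((x\<bullet>a)*(y\<bullet>a)) * ((x\<bullet>b)*(y\<bullet>b)) - (x\<bullet>a)^2 * (y\<bullet>b)^2 - (y\<bullet>a)^2*(x\<bullet>b)^2" for a b
    by (simp add: VV_def inner_diff_left inner_diff_right algebra_simps inner_commute power2_eq_square)
  have "(\<Sum>a\<in>Basis. \<Sum>b\<in>Basis. (VV a b x \<bullet> y) * (x \<bullet> VV a b y))
     = (\<Sum>a\<in>Basis. \<Sum>b\<in>Basis. 2 * ((x\<bullet>a)*(y\<bullet>a)) * ((x\<bullet>b)*(y\<bullet>b)) - (x\<bullet>a)^2 * (y\<bullet>b)^2 - (y\<bullet>a)^2*(x\<bullet>b)^2)"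
    by (simp add: e)
  also have "\<dots> = 2 * (\<Sum>a\<in>Basis. (x\<bullet>a)*(y\<bullet>a)) * (\<Sum>b\<in>Basis. (x\<bullet>b)*(y\<bullet>b))
      - (\<Sum>a\<in>Basis. (x\<bullet>a)^2) * (\<Sum>b\<in>Basis. (y\<bullet>b)^2) - (\<Sum>a\<in>Basis. (y\<bullet>a)^2) * (\<Sum>b\<in>Basis. (x\<bullet>b)^2)"
    by (simp only: sum_subtractf sp) (simp add: sum_distrib_left[symmetric])
  also have "\<dots> = 2 * (x \<bullet> y)^2 - 2 * (norm x)^2 * (norm y)^2"
    by (simp add: nx[symmetric] euclidean_inner[symmetric] power2_eq_square)
      (simp add: dot_square_norm power2_eq_square)
  finally show ?thesis .
qed

lemma Fe_identity:
  fixes x y :: "'a::euclidean_space"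
  shows "(\<Sum>a\<in>Basis. \<Sum>b\<in>Basis. \<Sum>i\<in>PiE {..<n+2} (\<lambda>_. Basis). Fe (n+2) a b i x * Fe (n+2) a b i y)
    = 2 * real (n+2) * ((real DIM('a) + real n) * (x \<bullet> y)^(n+2) - (real n + 1) * (norm x)^2 * (norm y)^2 * (x \<bullet> y)^n)"
proof -
  define m where "m = n + 2"
  have inner: "(\<Sum>i\<in>PiE {..<m} (\<lambda>_. Basis). Fe m a b i x * Fe m a b i y)
     = m * ((VV a b x \<bullet> VV a b y) * (x \<bullet> y)^(n+1)) + m * (m - 1) * ((VV a b x \<bullet> y) * (x \<bullet> VV a b y) * (x \<bullet> y)^n)" for a b
  proof -
    have "(\<Sum>i\<in>PiE {..<m} (\<lambda>_. Basis). Fe m a b i x * Fe m a b i y)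
      = (\<Sum>k<m. \<Sum>k'<m. \<Prod>l<m. slot k l (VV a b x) x \<bullet> slot k' l (VV a b y) y)"
      unfolding Fe_def by (rule B2)
    also have "\<dots> = (\<Sum>k<m. \<Sum>k'<m. if k = k' then (VV a b x \<bullet> VV a b y) * (x \<bullet> y)^(n+1)
           else (VV a b x \<bullet> y) * (x \<bullet> VV a b y) * (x \<bullet> y)^n)"
      by (intro sum.cong refl, subst B3) (auto simp: m_def)
    also have "\<dots> = m * ((VV a b x \<bullet> VV a b y) * (x \<bullet> y)^(n+1)) + m * (m - 1) * ((VV a b x \<bullet> y) * (x \<bullet> VV a b y) * (x \<bullet> y)^n)"
      by (rule B4)
    finally show ?thesis .
  qed
  have "(\<Sum>a\<in>Basis. \<Sum>b\<in>Basis. \<Sum>i\<in>PiE {..<m} (\<lambda>_. Basis). Fe m a b i x * Fe m a b i y)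
     = (\<Sum>a\<in>Basis. \<Sum>b\<in>Basis. m * (x \<bullet> y)^(n+1) * (VV a b x \<bullet> VV a b y) + m * (m - 1) * (x \<bullet> y)^n * ((VV a b x \<bullet> y) * (x \<bullet> VV a b y)))"
    by (simp add: inner algebra_simps)
  also have "\<dots> = m * (x \<bullet> y)^(n+1) * (\<Sum>a\<in>Basis. \<Sum>b\<in>Basis. VV a b x \<bullet> VV a b y)
      + m * (m - 1) * (x \<bullet> y)^n * (\<Sum>a\<in>Basis. \<Sum>b\<in>Basis. (VV a b x \<bullet> y) * (x \<bullet> VV a b y))"
    by (simp add: sum.distrib sum_distrib_left)
  also have "\<dots> = m * (x \<bullet> y)^(n+1) * (2 * (real DIM('a) - 1) * (x \<bullet> y))
      + m * (m - 1) * (x \<bullet> y)^n * (2 * (x \<bullet> y)^2 - 2 * (norm x)^2 * (norm y)^2)"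
    by (simp add: B5a B5b)
  also have "\<dots> = 2 * real (n+2) * ((real DIM('a) + real n) * (x \<bullet> y)^(n+2) - (real n + 1) * (norm x)^2 * (norm y)^2 * (x \<bullet> y)^n)"
    by (simp add: m_def algebra_simps power2_eq_square)
  finally show ?thesis by (simp add: m_def)
qed

lemma coeff_quad_pow:
  fixes u0 u1 :: real
  shows "coeff ([:u0, u1, 1:]^n) 0 = u0^n \<and> coeff ([:u0, u1, 1:]^n) 1 = n*u1*u0^(n-1)
     \<and> coeff ([:u0, u1, 1:]^n) 2 = n*u0^(n-1) + (n*(n-1)/2)*u1^2*u0^(n-2)"
proof (induction n)
  case 0 thus ?case by simp
next
  case (Suc n)
  note IH = Suc.IH
  have e: "[:u0, u1, 1:]^(Suc n) = smult u0 ([:u0, u1, 1:]^n) + pCons 0 (smult u1 ([:u0, u1, 1:]^n) + pCons 0 ([:u0, u1, 1:]^n))"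
    by (simp add: mult_pCons_left)
  have c0: "coeff ([:u0, u1, 1:]^(Suc n)) 0 = u0 * coeff ([:u0, u1, 1:]^n) 0" by (subst e) simp
  have c1: "coeff ([:u0, u1, 1:]^(Suc n)) 1 = u0 * coeff ([:u0, u1, 1:]^n) 1 + u1 * coeff ([:u0, u1, 1:]^n) 0"
    by (subst e) (simp add: coeff_pCons)
  have c2: "coeff ([:u0, u1, 1:]^(Suc n)) 2 = u0 * coeff ([:u0, u1, 1:]^n) 2 + u1 * coeff ([:u0, u1, 1:]^n) 1 + coeff ([:u0, u1, 1:]^n) 0"
    by (subst e) (simp add: numeral_2_eq_2)
  have h0: "coeff ([:u0, u1, 1:]^(Suc n)) 0 = u0 * u0^n" using c0 IH by simp
  have h1: "coeff ([:u0, u1, 1:]^(Suc n)) 1 = u0 * (n*u1*u0^(n-1)) + u1 * u0^n" using c1 IH by simp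
  have h2: "coeff ([:u0, u1, 1:]^(Suc n)) 2 = u0 * (n*u0^(n-1) + (real n*(real n-1)/2)*u1^2*u0^(n-2)) + u1 * (n*u1*u0^(n-1)) + u0^n"
    using c2 IH by simp
  show ?case
    unfolding h0 h1 h2
  proof (cases n)
    case 0 thus "u0 * u0 ^ n = u0 ^ Suc n \<and> u0 * (real n * u1 * u0 ^ (n - 1)) + u1 * u0 ^ n = real (Suc n) * u1 * u0 ^ (Suc n - 1) \<and>
    u0 * (real n * u0 ^ (n - 1) + real n * (real n - 1) / 2 * u1\<^sup>2 * u0 ^ (n - 2)) + u1 * (real n * u1 * u0 ^ (n - 1)) + u0 ^ n =
    real (Suc n) * u0 ^ (Suc n - 1) + real (Suc n) * (real (Suc n) - 1) / 2 * u1\<^sup>2 * u0 ^ (Suc n - 2)" by simp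
  next
    case (Suc k)
    show "u0 * u0 ^ n = u0 ^ Suc n \<and> u0 * (real n * u1 * u0 ^ (n - 1)) + u1 * u0 ^ n = real (Suc n) * u1 * u0 ^ (Suc n - 1) \<and>
    u0 * (real n * u0 ^ (n - 1) + real n * (real n - 1) / 2 * u1\<^sup>2 * u0 ^ (n - 2)) + u1 * (real n * u1 * u0 ^ (n - 1)) + u0 ^ n =
    real (Suc n) * u0 ^ (Suc n - 1) + real (Suc n) * (real (Suc n) - 1) / 2 * u1\<^sup>2 * u0 ^ (Suc n - 2)"
    proof (cases k)
      case 0 thus ?thesis using \<open>n = Suc k\<close> by (simp add: power2_eq_square algebra_simps)
    next
      case (Suc l)
      thus ?thesis using \<open>n = Suc k\<close> by (simp add: power2_eq_square algebra_simps)
    qed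
  qed
qed



lemma cont_if_const [continuous_intros]:
  "continuous_on S f \<Longrightarrow> continuous_on S g \<Longrightarrow> continuous_on S (\<lambda>x. if P then f x else g x)"
  by (cases P) auto

lemma poweq:
  fixes x y :: "'a::euclidean_space"
  shows "(x \<bullet> y)^m = (\<Sum>i\<in>PiE {..<m} (\<lambda>_. Basis). (\<Prod>l<m. x \<bullet> i l) * (\<Prod>l<m. y \<bullet> i l))"
  by (subst B1) simp

lemma norm_VV: "a \<in> Basis \<Longrightarrow> b \<in> Basis \<Longrightarrow> norm (VV a b x) \<le> 2 * norm x"
proof -
  assume ab: "a \<in> Basis" "b \<in> Basis"
  have "norm (VV a b x) \<le> norm ((x \<bullet> a) *\<^sub>R b) + norm ((x \<bullet> b) *\<^sub>R a)"
    unfolding VV_def by (rule norm_triangle_ineq4)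
  also have "\<dots> \<le> norm x + norm x" using ab by (intro add_mono) (auto simp: Basis_le_norm)
  finally show ?thesis by simp
qed

lemma Fe_bound:
  fixes x :: "'a::euclidean_space"
  assumes "a \<in> Basis" "b \<in> Basis" "i \<in> PiE {..<m} (\<lambda>_. Basis)"
  shows "\<bar>Fe m a b i x\<bar> \<le> real m * 2^m * norm x ^ m"
proof -
  have "\<bar>\<Prod>l<m. slot k l (VV a b x) x \<bullet> i l\<bar> \<le> 2^m * norm x ^ m" for k
  proof -
    have "\<bar>\<Prod>l<m. slot k l (VV a b x) x \<bullet> i l\<bar> = (\<Prod>l<m. \<bar>slot k l (VV a b x) x \<bullet> i l\<bar>)"
      by (simp add: abs_prod)
    also have "\<dots> \<le> (\<Prod>l<m. 2 * norm x)"
    proof (rule prod_mono)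
      fix l assume l: "l \<in> {..<m}"
      hence il: "i l \<in> Basis" using assms(3) by auto
      have "\<bar>slot k l (VV a b x) x \<bullet> i l\<bar> \<le> norm (slot k l (VV a b x) x)"
        using il by (rule Basis_le_norm)
      also have "\<dots> \<le> 2 * norm x" using norm_VV[OF assms(1,2), of x] by (auto simp: slot_def)
      finally show "0 \<le> \<bar>slot k l (VV a b x) x \<bullet> i l\<bar> \<and> \<bar>slot k l (VV a b x) x \<bullet> i l\<bar> \<le> 2 * norm x" by simp
    qed
    also have "\<dots> = 2^m * norm x ^ m" by (simp add: power_mult_distrib)
    finally show ?thesis .
  qed
  hence "\<bar>Fe m a b i x\<bar> \<le> (\<Sum>k<m. 2^m * norm x ^ m)"
    unfolding Fe_def by (intro order_trans[OF sum_abs] sum_mono) auto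
  thus ?thesis by simp
qed

lemma cont_Fe [continuous_intros]: "continuous_on UNIV (Fe m a b i)"
  unfolding Fe_def slot_def VV_def by (intro continuous_intros)

locale mom =
  fixes M :: "'a::euclidean_space measure" and p :: nat
  assumes PS: "prob_space M" and sets_M: "sets M = sets borel"
    and intp: "integrable M (\<lambda>x. norm x ^ p)"
begin

lemma meas: "continuous_on UNIV h \<Longrightarrow> h \<in> borel_measurable M"
  using borel_measurable_continuous_onI measurable_cong_sets[OF sets_M refl] by blast

lemma int_bound:
  fixes h :: "'a \<Rightarrow> real"
  assumes "continuous_on UNIV h" "\<And>x. \<bar>h x\<bar> \<le> C * norm x ^ p"
  shows "integrable M h"
proof (rule Bochner_Integration.integrable_bound[where f="\<lambda>x. C * norm x ^ p"])
  show "integrable M (\<lambda>x. C * norm x ^ p)" using intp by simp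
  show "h \<in> borel_measurable M" using meas[OF assms(1)] .
  show "AE x in M. norm (h x) \<le> norm (C * norm x ^ p)"
    using assms(2) by (intro AE_I2) (smt (verit) real_norm_def)
qed

lemma int1:
  assumes "r + m = p"
  shows "integrable M (\<lambda>x. norm x ^ r * (x \<bullet> y)^m)"
proof (rule int_bound)
  show "continuous_on UNIV (\<lambda>x. norm x ^ r * (x \<bullet> y)^m)" by (intro continuous_intros)
  fix x
  have "\<bar>norm x ^ r * (x \<bullet> y)^m\<bar> = norm x ^ r * \<bar>x \<bullet> y\<bar>^m" by (simp add: abs_mult power_abs)
  also have "\<dots> \<le> norm x ^ r * (norm x * norm y)^m"
    by (intro mult_left_mono power_mono) (auto simp: Cauchy_Schwarz_ineq2)
  also have "\<dots> = norm y ^ m * norm x ^ p" using assms by (simp add: power_mult_distrib power_add[symmetric])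
  finally show "\<bar>norm x ^ r * (x \<bullet> y)^m\<bar> \<le> norm y ^ m * norm x ^ p" .
qed

lemma int_mon:
  assumes "r + m = p" "i \<in> PiE {..<m} (\<lambda>_. Basis)"
  shows "integrable M (\<lambda>x. norm x ^ r * (\<Prod>l<m. x \<bullet> i l))"
proof (rule int_bound)
  show "continuous_on UNIV (\<lambda>x. norm x ^ r * (\<Prod>l<m. x \<bullet> i l))" by (intro continuous_intros)
  fix x
  have "\<bar>\<Prod>l<m. x \<bullet> i l\<bar> \<le> (\<Prod>l<m. norm x)"
    unfolding abs_prod using assms(2) by (intro prod_mono) (auto simp: Basis_le_norm PiE_iff)
  hence "\<bar>norm x ^ r * (\<Prod>l<m. x \<bullet> i l)\<bar> \<le> norm x ^ r * norm x ^ m"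
    by (simp add: abs_mult mult_left_mono)
  also have "\<dots> = 1 * norm x ^ p" using assms by (simp add: power_add[symmetric])
  finally show "\<bar>norm x ^ r * (\<Prod>l<m. x \<bullet> i l)\<bar> \<le> 1 * norm x ^ p" .
qed

lemma int_Fe:
  assumes "r + m = p" "a \<in> Basis" "b \<in> Basis" "i \<in> PiE {..<m} (\<lambda>_. Basis)"
  shows "integrable M (\<lambda>x. norm x ^ r * Fe m a b i x)"
proof (rule int_bound)
  show "continuous_on UNIV (\<lambda>x. norm x ^ r * Fe m a b i x)" by (intro continuous_intros)
  fix x
  have "\<bar>norm x ^ r * Fe m a b i x\<bar> \<le> norm x ^ r * (real m * 2^m * norm x ^ m)"
    using Fe_bound[OF assms(2-4), of x] by (simp add: abs_mult mult_left_mono)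
  also have "\<dots> = (real m * 2^m) * norm x ^ p" using assms(1) by (simp add: power_add[symmetric] algebra_simps)
  finally show "\<bar>norm x ^ r * Fe m a b i x\<bar> \<le> (real m * 2^m) * norm x ^ p" .
qed


lemma bound1: "r + m = p \<Longrightarrow> \<bar>norm x ^ r * (x \<bullet> y)^m\<bar> \<le> norm y ^ m * norm x ^ p"
proof -
  assume assms: "r + m = p"
  have "\<bar>norm x ^ r * (x \<bullet> y)^m\<bar> = norm x ^ r * \<bar>x \<bullet> y\<bar>^m" by (simp add: abs_mult power_abs)
  also have "\<dots> \<le> norm x ^ r * (norm x * norm y)^m"
    by (intro mult_left_mono power_mono) (auto simp: Cauchy_Schwarz_ineq2)
  also have "\<dots> = norm y ^ m * norm x ^ p" using assms by (simp add: power_mult_distrib power_add[symmetric])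
  finally show ?thesis .
qed

definition F :: "nat \<Rightarrow> nat \<Rightarrow> 'a \<Rightarrow> real" where
  "F r m y = (LINT x|M. norm x ^ r * (x \<bullet> y)^m)"

definition J :: "nat \<Rightarrow> nat \<Rightarrow> real" where
  "J r m = (LINT y|M. norm y ^ r * F r m y)"

definition E :: real where "E = (LINT x|M. norm x ^ p)"

lemma F_poly:
  assumes "r + m = p"
  shows "F r m y = (\<Sum>i\<in>PiE {..<m} (\<lambda>_. Basis). (LINT x|M. norm x ^ r * (\<Prod>l<m. x \<bullet> i l)) * (\<Prod>l<m. y \<bullet> i l))"
proof -
  have "F r m y = (LINT x|M. (\<Sum>i\<in>PiE {..<m} (\<lambda>_. Basis). (norm x ^ r * (\<Prod>l<m. x \<bullet> i l)) * (\<Prod>l<m. y \<bullet> i l)))"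
    unfolding F_def by (subst poweq) (simp add: sum_distrib_left mult.assoc)
  also have "\<dots> = (\<Sum>i\<in>PiE {..<m} (\<lambda>_. Basis). (LINT x|M. (norm x ^ r * (\<Prod>l<m. x \<bullet> i l)) * (\<Prod>l<m. y \<bullet> i l)))"
    by (rule Bochner_Integration.integral_sum) (intro integrable_mult_left int_mon[OF assms])
  also have "\<dots> = (\<Sum>i\<in>PiE {..<m} (\<lambda>_. Basis). (LINT x|M. norm x ^ r * (\<Prod>l<m. x \<bullet> i l)) * (\<Prod>l<m. y \<bullet> i l))"
    by simp
  finally show ?thesis .
qed

lemma F_cont: 
  assumes "r + m = p" shows "continuous_on UNIV (F r m)"
proof -
  have "F r m = (\<lambda>y. \<Sum>i\<in>PiE {..<m} (\<lambda>_. Basis). (LINT x|M. norm x ^ r * (\<Prod>l<m. x \<bullet> i l)) * (\<Prod>l<m. y \<bullet> i l))"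
    by (rule ext, rule F_poly[OF assms])
  thus ?thesis by (auto intro!: continuous_intros)
qed

lemma F_bound:
  assumes "r + m = p"
  shows "\<bar>F r m y\<bar> \<le> E * norm y ^ m"
proof -
  have "norm (F r m y) \<le> (LINT x|M. norm y ^ m * norm x ^ p)"
    unfolding F_def
    using bound1[OF assms] intp
    by (intro Bochner_Integration.integral_norm_bound_integral int1[OF assms]) (auto simp del: norm_mult)
  also have "\<dots> = E * norm y ^ m" by (simp add: E_def)
  finally show ?thesis by simp
qed

lemma int2:
  assumes "r + m = p"
  shows "integrable M (\<lambda>y. norm y ^ r * F r m y)"
proof (rule int_bound)
  show "continuous_on UNIV (\<lambda>y. norm y ^ r * F r m y)" using F_cont[OF assms] by (intro continuous_intros)
  fix y
  have "\<bar>norm y ^ r * F r m y\<bar> \<le> norm y ^ r * (E * norm y ^ m)"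
    using F_bound[OF assms, of y] by (simp add: abs_mult mult_left_mono)
  also have "\<dots> = E * norm y ^ p" using assms by (simp add: power_add[symmetric] algebra_simps)
  finally show "\<bar>norm y ^ r * F r m y\<bar> \<le> E * norm y ^ p" .
qed


lemma lin: 
  fixes f1 f2 :: "'a \<Rightarrow> real"
  shows "integrable M f1 \<Longrightarrow> integrable M f2 \<Longrightarrow>
  (LINT x|M. C * (K1 * f1 x - K2 * f2 x)) = C * (K1 * integral\<^sup>L M f1 - K2 * integral\<^sup>L M f2)"
  by simp

lemma level:
  assumes rn: "r + n + 2 = p"
  defines "D \<equiv> (real DIM('a) + n) * J r (n+2) - (n+1) * J (r+2) n"
  shows "D \<ge> 0 \<and> (D = 0 \<longleftrightarrow> (\<forall>y. (real DIM('a) + n) * F r (n+2) y = (n+1) * (norm y)^2 * F (r+2) n y))"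
proof -
  define PI where "PI = PiE {..<n+2} (\<lambda>_. (Basis::'a set))"
  define g where "g a b i x = norm x ^ r * Fe (n+2) a b i x" for a b i and x :: 'a
  define A where "A a b i = (LINT x|M. g a b i x)" for a b i
  define G where "G y = norm y ^ r * ((real DIM('a) + n) * F r (n+2) y - (n+1) * (norm y)^2 * F (r+2) n y)" for y
  have r1: "r + (n+2) = p" and r2: "(r+2) + n = p" using rn by auto
  have intg: "integrable M (g a b i)" if "a \<in> Basis" "b \<in> Basis" "i \<in> PI" for a b i
    unfolding g_def using int_Fe[OF r1 that[unfolded PI_def]] .
  have pw: "(\<Sum>a\<in>Basis. \<Sum>b\<in>Basis. \<Sum>i\<in>PI. g a b i x * g a b i y)
     = 2*(n+2) * norm y ^ r * ((real DIM('a) + n) * (norm x ^ r * (x \<bullet> y)^(n+2))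
          - (n+1) * (norm y)^2 * (norm x ^ (r+2) * (x \<bullet> y)^n))" for x y
  proof -
    have "(\<Sum>a\<in>Basis. \<Sum>b\<in>Basis. \<Sum>i\<in>PI. g a b i x * g a b i y)
       = (\<Sum>a\<in>Basis. \<Sum>b\<in>Basis. \<Sum>i\<in>PI. (norm x ^ r * norm y ^ r) * (Fe (n+2) a b i x * Fe (n+2) a b i y))"
      unfolding g_def by (simp add: algebra_simps)
    also have "\<dots> = (norm x ^ r * norm y ^ r) * (\<Sum>a\<in>Basis. \<Sum>b\<in>Basis. \<Sum>i\<in>PI. Fe (n+2) a b i x * Fe (n+2) a b i y)"
      by (simp add: sum_distrib_left)
    also have "\<dots> = (norm x ^ r * norm y ^ r) * (2 * real (n+2) * ((real DIM('a) + real n) * (x \<bullet> y)^(n+2) - (real n + 1) * (norm x)^2 * (norm y)^2 * (x \<bullet> y)^n))"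
      unfolding PI_def by (simp only: Fe_identity)
    also have "\<dots> = 2*(n+2) * norm y ^ r * ((real DIM('a) + n) * (norm x ^ r * (x \<bullet> y)^(n+2))
          - (n+1) * (norm y)^2 * (norm x ^ (r+2) * (x \<bullet> y)^n))"
      by (simp add: power_add algebra_simps power2_eq_square)
    finally show ?thesis .
  qed
  have Gy: "2*(n+2) * G y = (\<Sum>a\<in>Basis. \<Sum>b\<in>Basis. \<Sum>i\<in>PI. A a b i * g a b i y)" for y
  proof -
    have "2*(n+2) * G y = (LINT x|M. 2*(n+2) * norm y ^ r * ((real DIM('a) + n) * (norm x ^ r * (x \<bullet> y)^(n+2))
          - (n+1) * (norm y)^2 * (norm x ^ (r+2) * (x \<bullet> y)^n)))"
      by (subst lin[OF int1[OF r1, of y] int1[OF r2, of y]]) (simp add: G_def F_def)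
    also have "\<dots> = (LINT x|M. (\<Sum>a\<in>Basis. \<Sum>b\<in>Basis. \<Sum>i\<in>PI. g a b i x * g a b i y))"
      by (simp add: pw)
    also have "\<dots> = (\<Sum>a\<in>Basis. LINT x|M. (\<Sum>b\<in>Basis. \<Sum>i\<in>PI. g a b i x * g a b i y))"
      using intg by (intro Bochner_Integration.integral_sum) auto
    also have "\<dots> = (\<Sum>a\<in>Basis. \<Sum>b\<in>Basis. LINT x|M. (\<Sum>i\<in>PI. g a b i x * g a b i y))"
      using intg by (intro sum.cong refl Bochner_Integration.integral_sum) auto
    also have "\<dots> = (\<Sum>a\<in>Basis. \<Sum>b\<in>Basis. \<Sum>i\<in>PI. LINT x|M. g a b i x * g a b i y)"
      using intg by (intro sum.cong refl Bochner_Integration.integral_sum) auto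
    also have "\<dots> = (\<Sum>a\<in>Basis. \<Sum>b\<in>Basis. \<Sum>i\<in>PI. A a b i * g a b i y)"
      by (simp add: A_def)
    finally show ?thesis .
  qed
  have Geq: "G = (\<lambda>y. 1 * ((real DIM('a) + n) * (norm y^r * F r (n+2) y) - (n+1) * (norm y^(r+2) * F (r+2) n y)))"
    by (rule ext) (simp add: G_def power_add algebra_simps power2_eq_square)
  have intGD: "(LINT y|M. G y) = D"
    by (subst Geq, subst lin[OF int2[OF r1] int2[OF r2]]) (simp add: D_def J_def)
  have DA: "2*(n+2) * D = (\<Sum>a\<in>Basis. \<Sum>b\<in>Basis. \<Sum>i\<in>PI. (A a b i)^2)"
  proof -
    have "2*(n+2) * D = (LINT y|M. 2*(n+2) * G y)" using intGD by simp
    also have "\<dots> = (LINT y|M. (\<Sum>a\<in>Basis. \<Sum>b\<in>Basis. \<Sum>i\<in>PI. A a b i * g a b i y))"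
      by (simp only: Gy)
    also have "\<dots> = (\<Sum>a\<in>Basis. \<Sum>b\<in>Basis. \<Sum>i\<in>PI. A a b i * A a b i)"
      using intg by (simp add: A_def)
    finally show ?thesis by (simp add: power2_eq_square)
  qed
  have D0: "D \<ge> 0"
  proof -
    have "0 \<le> (\<Sum>a\<in>Basis. \<Sum>b\<in>Basis. \<Sum>i\<in>PI. (A a b i)^2)" by (intro sum_nonneg) auto
    with DA have "(2*(real n+2)) * 0 \<le> (2*(real n+2)) * D" by (simp add: algebra_simps)
    thus ?thesis by (rule mult_left_le_imp_le) simp
  qed
  have "D = 0 \<longleftrightarrow> (\<forall>y. (real DIM('a) + n) * F r (n+2) y = (n+1) * (norm y)^2 * F (r+2) n y)"
  proof
    assume "D = 0"
    hence "(\<Sum>a\<in>Basis. \<Sum>b\<in>Basis. \<Sum>i\<in>PI. (A a b i)^2) = 0" using DA by simp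
    hence "\<forall>a\<in>Basis. \<forall>b\<in>Basis. \<forall>i\<in>PI. A a b i = 0"
      unfolding PI_def by (simp add: sum_nonneg_eq_0_iff sum_nonneg finite_PiE)
    hence G0: "G y = 0" for y using Gy[of y] by simp
    show "\<forall>y. (real DIM('a) + n) * F r (n+2) y = (n+1) * (norm y)^2 * F (r+2) n y"
    proof
      fix y :: 'a
      show "(real DIM('a) + n) * F r (n+2) y = (n+1) * (norm y)^2 * F (r+2) n y"
      proof (cases "y = 0")
        case True thus ?thesis by (simp add: F_def)
      next
        case False thus ?thesis using G0[of y] by (simp add: G_def)
      qed
    qed
  next
    assume rel: "\<forall>y. (real DIM('a) + n) * F r (n+2) y = (n+1) * (norm y)^2 * F (r+2) n y"
    hence "G y = 0" for y by (simp add: G_def)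
    thus "D = 0" using intGD by simp
  qed
  with D0 show ?thesis by (simp add: add.commute)
qed


lemma int3:
  assumes "r + q + k = p"
  shows "integrable M (\<lambda>x. norm x ^ r * ((x \<bullet> b)^q * (x \<bullet> y)^k))"
proof (rule int_bound)
  show "continuous_on UNIV (\<lambda>x. norm x ^ r * ((x \<bullet> b)^q * (x \<bullet> y)^k))" by (intro continuous_intros)
  fix x
  have "\<bar>norm x ^ r * ((x \<bullet> b)^q * (x \<bullet> y)^k)\<bar> = norm x ^ r * (\<bar>x \<bullet> b\<bar>^q * \<bar>x \<bullet> y\<bar>^k)"
    by (simp add: abs_mult power_abs)
  also have "\<dots> \<le> norm x ^ r * ((norm x * norm b)^q * (norm x * norm y)^k)"
    by (intro mult_left_mono mult_mono power_mono) (auto simp: Cauchy_Schwarz_ineq2)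
  also have "\<dots> = (norm b ^ q * norm y ^ k) * norm x ^ p"
    using assms by (simp add: power_mult_distrib power_add[symmetric] algebra_simps)
  finally show "\<bar>norm x ^ r * ((x \<bullet> b)^q * (x \<bullet> y)^k)\<bar> \<le> (norm b ^ q * norm y ^ k) * norm x ^ p" .
qed

lemma lap:
  assumes rj: "r + (2*j+2) = p" and hB: "\<forall>y. F r (2*j+2) y = B * norm y ^ (2*j+2)"
  shows "F (r+2) (2*j) y = B * (real DIM('a) + 2*j) / (2*j+1) * norm y ^ (2*j)"
proof -
  define n where "n = 2*j+2"
  define sq where "sq = (norm y)^2"
  define I where "I b q = (LINT x|M. norm x^r * ((x \<bullet> b)^q * (x \<bullet> y)^(n-q)))" for b q
  have key: "real (n choose 2) * I b 2 = B * ((j+1)* sq^j) + B * (2*(j+1)*j* sq^(j-1)) * (y \<bullet> b)^2"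
    if b: "b \<in> Basis" for b
  proof -
    define P where "P = (\<Sum>q\<le>n. monom (real (n choose q) * I b q) q)"
    define Q where "Q = smult B ([:sq, 2*(y \<bullet> b), 1:]^(j+1))"
    have "poly P t = poly Q t" for t
    proof -
      have "poly P t = (\<Sum>q\<le>n. real (n choose q) * I b q * t^q)" by (simp add: P_def poly_sum poly_monom)
      also have "\<dots> = (\<Sum>q\<le>n. (LINT x|M. (real (n choose q) * t^q) * (norm x^r * ((x \<bullet> b)^q * (x \<bullet> y)^(n-q)))))"
        by (simp add: I_def algebra_simps)
      also have "\<dots> = (LINT x|M. (\<Sum>q\<le>n. (real (n choose q) * t^q) * (norm x^r * ((x \<bullet> b)^q * (x \<bullet> y)^(n-q)))))"
        using rj by (intro Bochner_Integration.integral_sum[symmetric] integrable_mult_right int3) (auto simp: n_def)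
      also have "\<dots> = (LINT x|M. norm x ^ r * (x \<bullet> (y + t *\<^sub>R b))^n)"
      proof (rule Bochner_Integration.integral_cong[OF refl])
        fix x
        have "(x \<bullet> (y + t *\<^sub>R b))^n = (t * (x \<bullet> b) + x \<bullet> y)^n" by (simp add: inner_add_right algebra_simps)
        also have "\<dots> = (\<Sum>q\<le>n. real (n choose q) * (t * (x \<bullet> b))^q * (x \<bullet> y)^(n-q))"
          by (rule binomial_ring)
        finally show "(\<Sum>q\<le>n. (real (n choose q) * t^q) * (norm x^r * ((x \<bullet> b)^q * (x \<bullet> y)^(n-q)))) = norm x ^ r * (x \<bullet> (y + t *\<^sub>R b))^n"
          by (simp add: sum_distrib_left power_mult_distrib algebra_simps)
      qed
      also have "\<dots> = F r n (y + t *\<^sub>R b)" by (simp add: F_def)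
      also have "\<dots> = B * norm (y + t *\<^sub>R b) ^ n" using hB by (simp add: n_def)
      also have "norm (y + t *\<^sub>R b) ^ n = (sq + t * (2 * (y \<bullet> b) + t))^(j+1)"
      proof -
        have "(norm (y + t *\<^sub>R b))^2 = (y + t *\<^sub>R b) \<bullet> (y + t *\<^sub>R b)" by (rule power2_norm_eq_inner)
        also have "\<dots> = y \<bullet> y + t * (2 * (y \<bullet> b) + t)"
          using b by (simp add: inner_add_left inner_add_right algebra_simps inner_commute inner_Basis)
        also have "y \<bullet> y = sq" by (simp add: sq_def power2_norm_eq_inner)
        finally have "(norm (y + t *\<^sub>R b))^2 = sq + t * (2 * (y \<bullet> b) + t)" .
        moreover have "norm (y + t *\<^sub>R b) ^ n = ((norm (y + t *\<^sub>R b))^2)^(j+1)"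
          unfolding power_mult[symmetric] n_def by (simp add: algebra_simps)
        ultimately show ?thesis by simp
      qed
      also have "B * (sq + t * (2 * (y \<bullet> b) + t))^(j+1) = poly Q t" by (simp add: Q_def) (simp add: algebra_simps)
      finally show ?thesis .
    qed
    hence "P = Q" using poly_eq_poly_eq_iff by blast
    hence "coeff P 2 = coeff Q 2" by simp
    moreover have "coeff P 2 = real (n choose 2) * I b 2"
    proof -
      have n2: "(2::nat) \<le> n" by (simp add: n_def)
      have "coeff P 2 = (\<Sum>q\<le>n. if q = 2 then real (n choose q) * I b q else 0)"
        by (simp only: P_def coeff_sum coeff_monom)
      also have "\<dots> = (if 2 \<in> {..n} then real (n choose 2) * I b 2 else 0)"
        by (simp only: sum.delta finite_atMost)
      also have "\<dots> = real (n choose 2) * I b 2" using n2 by (simp only: atMost_iff if_True)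
      finally show ?thesis .
    qed
    moreover have "coeff Q 2 = B * ((j+1)* sq^j) + B * (2*(j+1)*j* sq^(j-1)) * (y \<bullet> b)^2"
      using coeff_quad_pow[of sq "2*(y \<bullet> b)" "j+1"] by (simp add: Q_def power2_eq_square algebra_simps)
    ultimately show ?thesis by simp
  qed
  have sumI: "(\<Sum>b\<in>Basis. I b 2) = F (r+2) (2*j) y"
  proof -
    have "(\<Sum>b\<in>Basis. I b 2) = (LINT x|M. (\<Sum>b\<in>Basis. norm x^r * ((x \<bullet> b)^2 * (x \<bullet> y)^(n-2))))"
      unfolding I_def using rj by (intro Bochner_Integration.integral_sum[symmetric] int3) (auto simp: n_def)
    also have "\<dots> = F (r+2) (2*j) y"
      unfolding F_def
    proof (rule Bochner_Integration.integral_cong[OF refl])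
      fix x :: 'a
      have "(\<Sum>b\<in>Basis. (x \<bullet> b)^2) = (norm x)^2"
        unfolding power2_norm_eq_inner by (subst (2) euclidean_inner) (simp add: power2_eq_square)
      moreover have "(\<Sum>b\<in>Basis. norm x^r * ((x \<bullet> b)^2 * (x \<bullet> y)^(n-2))) = norm x^r * ((\<Sum>b\<in>Basis. (x \<bullet> b)^2) * (x \<bullet> y)^(n-2))"
        by (simp only: sum_distrib_left sum_distrib_right)
      ultimately show "(\<Sum>b\<in>Basis. norm x^r * ((x \<bullet> b)^2 * (x \<bullet> y)^(n-2))) = norm x ^ (r+2) * (x \<bullet> y)^(2*j)"
        by (simp add: n_def power_add algebra_simps power2_eq_square)
    qed
    finally show ?thesis .
  qed
  have sy: "(\<Sum>b\<in>Basis. (y \<bullet> b)^2) = sq"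
    unfolding sq_def power2_norm_eq_inner by (subst (2) euclidean_inner) (simp add: power2_eq_square)
  have "real (n choose 2) * F (r+2) (2*j) y = (\<Sum>b\<in>Basis. real (n choose 2) * I b 2)"
    by (simp only: sumI[symmetric] sum_distrib_left)
  also have "\<dots> = (\<Sum>b\<in>Basis. B * ((j+1)* sq^j) + B * (2*(j+1)*j* sq^(j-1)) * (y \<bullet> b)^2)"
    by (intro sum.cong refl key)
  also have "\<dots> = real DIM('a) * (B * ((j+1)* sq^j)) + B * (2*(j+1)*j* sq^(j-1)) * sq"
    by (simp add: sum.distrib sum_distrib_left[symmetric] sy)
  also have "\<dots> = B * (j+1) * (real DIM('a) + 2*j) * sq^j"
    by (cases j) (simp_all add: algebra_simps)
  finally have eq: "real (n choose 2) * F (r+2) (2*j) y = B * (j+1) * (real DIM('a) + 2*j) * sq^j" .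
  have nc: "real (n choose 2) = (j+1) * (2*j+1)"
  proof -
    have "n choose 2 = n * (n - 1) div 2" by (rule choose_two)
    also have "n * (n-1) = 2 * ((j+1)*(2*j+1))" by (simp add: n_def algebra_simps)
    finally show ?thesis by simp
  qed
  have "sq^j = norm y ^ (2*j)" by (simp add: sq_def power_mult)
  with eq nc have "real (j+1) * ((2*j+1) * F (r+2) (2*j) y) = real (j+1) * (B * (real DIM('a) + 2*j) * norm y ^ (2*j))"
    by (simp only: mult.assoc[symmetric]) (simp add: algebra_simps)
  hence "(2*j+1) * F (r+2) (2*j) y = B * (real DIM('a) + 2*j) * norm y ^ (2*j)"
    by (subst (asm) mult_left_cancel) auto
  thus ?thesis by (simp add: field_simps)
qed

end



lemma seq_chain:
  fixes S Dl :: "nat \<Rightarrow> real" and d :: real and k :: nat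
  assumes d: "d \<ge> 1"
  shows "(\<forall>j<k. (d + 2*real j) * S (j+1) = (2*real j+1) * S j + Dl j) \<Longrightarrow> (\<forall>j<k. Dl j \<ge> 0) \<Longrightarrow>
    S k - (\<Prod>j<k. (2*real j+1)/(d+2*real j)) * S 0 \<ge> 0 \<and>
    (S k - (\<Prod>j<k. (2*real j+1)/(d+2*real j)) * S 0 = 0 \<longleftrightarrow> (\<forall>j<k. Dl j = 0))"
proof (induction k)
  case 0 thus ?case by simp
next
  case (Suc n)
  define C where "C = (\<Prod>j<n. (2*real j+1)/(d+2*real j))"
  define T where "T = S n - C * S 0"
  from Suc.prems have IH: "T \<ge> 0 \<and> (T = 0 \<longleftrightarrow> (\<forall>j<n. Dl j = 0))"
    using Suc.IH unfolding T_def C_def by auto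
  have dp: "d + 2*real n > 0" using d by simp
  have rec: "(d + 2*real n) * S (n+1) = (2*real n+1) * S n + Dl n" and Dn: "Dl n \<ge> 0" using Suc.prems by auto
  have "S (Suc n) - (\<Prod>j<Suc n. (2*real j+1)/(d+2*real j)) * S 0 = ((2*real n+1) * T + Dl n) / (d + 2*real n)"
  proof -
    have "(\<Prod>j<Suc n. (2*real j+1)/(d+2*real j)) = C * ((2*real n+1)/(d+2*n))" by (simp add: C_def)
    moreover have "S (Suc n) = ((2*real n+1) * S n + Dl n) / (d + 2*real n)" using rec dp by (simp add: field_simps)
    ultimately show ?thesis using dp by (simp add: T_def field_simps)
  qed
  moreover have "((2*real n+1) * T + Dl n) / (d + 2*real n) \<ge> 0" using IH Dn dp by simp
  moreover have "((2*real n+1) * T + Dl n) / (d + 2*real n) = 0 \<longleftrightarrow> T = 0 \<and> Dl n = 0"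
  proof -
    have "((2*real n+1) * T + Dl n) / (d + 2*real n) = 0 \<longleftrightarrow> (2*real n+1) * T + Dl n = 0" using dp by simp
    also have "\<dots> \<longleftrightarrow> T = 0 \<and> Dl n = 0"
      using IH Dn by (smt (verit, best) mult_nonneg_nonneg of_nat_0_le_iff zero_less_mult_iff)
    finally show ?thesis .
  qed
  ultimately show ?case using IH by (auto simp: less_Suc_eq)
qed

theorem mainTheorem14:
  fixes M :: "'a::euclidean_space measure" and p :: nat
  assumes "even p" and "p \<ge> 2"
    and "Pp p M"
    and "prob_p_frame p M"
  shows "PFP p M \<ge> frame_const p DIM('a) * (LINT x|M. norm x ^ p)\<^sup>2
         \<and> (PFP p M = frame_const p DIM('a) * (LINT x|M. norm x ^ p)\<^sup>2
              \<longleftrightarrow> tight_prob_p_frame p M)"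
proof -
  from assms(3) have PS: "prob_space M" and sM: "sets M = sets borel" and ip: "integrable M (\<lambda>x. norm x^p)"
    by (auto simp: Pp_def)
  interpret mom M p using PS sM ip by (simp add: mom_def)
  obtain k where pk: "p = 2*k" using assms(1) by (auto elim: evenE)
  define d where "d = real DIM('a)"
  have d1: "d \<ge> 1" unfolding d_def using DIM_positive[where 'a='a] by linarith
  define S where "S j = J (p - 2*j) (2*j)" for j
  define Dl where "Dl j = (d + 2*real j) * J (p - 2*j - 2) (2*j + 2) - (2*real j + 1) * J (p - 2*j) (2*j)" for j
  define R where "R j \<longleftrightarrow> (\<forall>y. (d + 2*real j) * F (p-2*j-2) (2*j+2) y = (2*real j+1) * (norm y)^2 * F (p-2*j) (2*j) y)" for j
  define C where "C n = (\<Prod>j<n. (2*real j+1)/(d+2*real j))" for n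
  have lev: "Dl j \<ge> 0 \<and> (Dl j = 0 \<longleftrightarrow> R j)" if "j < k" for j
  proof -
    have h: "p - 2*j - 2 + 2*j + 2 = p" using that pk by simp
    have e: "p - 2*j - 2 + 2 = p - 2*j" using that pk by simp
    from level[OF h] show ?thesis unfolding Dl_def R_def d_def e by (simp add: algebra_simps)
  qed
  have rec: "\<forall>j<k. (d + 2*real j) * S (j+1) = (2*real j+1) * S j + Dl j"
  proof (intro allI impI)
    fix j assume "j < k"
    have "p - 2*(j+1) = p - 2*j - 2" "2*(j+1) = 2*j+2" by auto
    thus "(d + 2*real j) * S (j+1) = (2*real j+1) * S j + Dl j" unfolding S_def Dl_def by simp
  qed
  have chain: "S k - C k * S 0 \<ge> 0 \<and> (S k - C k * S 0 = 0 \<longleftrightarrow> (\<forall>j<k. Dl j = 0))"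
    using seq_chain[OF d1, of k S Dl] rec lev unfolding C_def by auto
  have Cpos: "C n > 0" for n unfolding C_def using d1 by (intro prod_pos) (auto intro!: divide_pos_pos)
  have FE: "F p 0 y = E" for y by (simp add: F_def E_def)
  have S0: "S 0 = E^2" by (simp add: S_def J_def FE E_def power2_eq_square)
  have SK: "S k = PFP p M"
  proof -
    have "S k = (LINT y|M. (LINT x|M. (x \<bullet> y)^p))" by (simp add: S_def pk J_def F_def)
    also have "\<dots> = (LINT y|M. (LINT x|M. \<bar>y \<bullet> x\<bar>^p))"
      using assms(1) by (simp add: power_even_abs inner_commute)
    finally show ?thesis by (simp add: PFP_def)
  qed
  have fc: "frame_const p DIM('a) = C k" by (simp add: frame_const_def C_def pk d_def) (simp add: add.commute)
  have Edef: "(LINT x|M. norm x ^ p) = E" by (simp add: E_def)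
  have Fp: "(LINT x|M. \<bar>x \<bullet> y\<bar> ^ p) = F 0 p y" for y
    using assms(1) by (simp add: F_def power_even_abs)
  have ineq: "PFP p M \<ge> frame_const p DIM('a) * (LINT x|M. norm x ^ p)\<^sup>2"
    using chain unfolding fc Edef SK[symmetric] S0[symmetric] by simp
  have eqR: "PFP p M = frame_const p DIM('a) * (LINT x|M. norm x ^ p)\<^sup>2 \<longleftrightarrow> (\<forall>j<k. R j)"
  proof -
    have "PFP p M = frame_const p DIM('a) * (LINT x|M. norm x ^ p)\<^sup>2 \<longleftrightarrow> S k - C k * S 0 = 0"
      unfolding fc Edef SK[symmetric] S0[symmetric] by simp
    also have "\<dots> \<longleftrightarrow> (\<forall>j<k. Dl j = 0)" using chain by simp
    also have "\<dots> \<longleftrightarrow> (\<forall>j<k. R j)" using lev by auto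
    finally show ?thesis .
  qed
  have Epos: "E > 0"
  proof -
    from assms(4) obtain A0 where A0: "A0 > 0" "\<forall>y. A0 * norm y ^ p \<le> (LINT x|M. \<bar>x \<bullet> y\<bar> ^ p)"
      unfolding prob_p_frame_def by auto
    obtain b :: 'a where b: "b \<in> Basis" using nonempty_Basis by blast
    have "A0 = A0 * norm b ^ p" using b by simp
    also have "\<dots> \<le> (LINT x|M. \<bar>x \<bullet> b\<bar> ^ p)" using A0 by simp
    also have "\<dots> \<le> E"
      unfolding E_def
    proof (rule Bochner_Integration.integral_mono)
      show "integrable M (\<lambda>x. \<bar>x \<bullet> b\<bar> ^ p)" using int1[of 0 p b] assms(1) by (simp add: power_even_abs)
      show "integrable M (\<lambda>x. norm x ^ p)" by (rule ip)
      fix x show "\<bar>x \<bullet> b\<bar> ^ p \<le> norm x ^ p" using b by (intro power_mono) (auto simp: Basis_le_norm)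
    qed
    finally show ?thesis using A0 by simp
  qed
  have "(\<forall>j<k. R j) \<longleftrightarrow> tight_prob_p_frame p M"
  proof
    assume allR: "\<forall>j<k. R j"
    have Fform: "n \<le> k \<Longrightarrow> F (p - 2*n) (2*n) y = C n * E * norm y ^ (2*n)" for n y
    proof (induction n arbitrary: y)
      case 0 thus ?case by (simp add: FE C_def)
    next
      case (Suc n)
      have "n < k" using Suc.prems by simp
      hence Rn: "(d + 2*real n) * F (p-2*n-2) (2*n+2) y = (2*real n+1) * (norm y)^2 * F (p-2*n) (2*n) y"
        using allR unfolding R_def by blast
      have dp: "d + 2*real n > 0" using d1 by simp
      have "F (p - 2*Suc n) (2*Suc n) y = F (p-2*n-2) (2*n+2) y" by (simp add: algebra_simps)
      also have "\<dots> = (2*real n+1) / (d + 2*real n) * (norm y)^2 * F (p-2*n) (2*n) y"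
        using Rn dp by (simp add: field_simps)
      also have "\<dots> = C (Suc n) * E * norm y ^ (2 * Suc n)"
        using Suc.IH[of y] Suc.prems by (simp add: C_def power_add power2_eq_square algebra_simps)
      finally show ?case .
    qed
    have "F 0 p y = C k * E * norm y ^ p" for y using Fform[of k y] pk by simp
    thus "tight_prob_p_frame p M"
      unfolding tight_prob_p_frame_def using PS sM Cpos[of k] Epos
      by (intro conjI exI[of _ "C k * E"]) (auto simp: Fp)
  next
    assume "tight_prob_p_frame p M"
    then obtain A where A: "\<forall>y. (LINT x|M. \<bar>x \<bullet> y\<bar> ^ p) = A * norm y ^ p"
      unfolding tight_prob_p_frame_def by auto
    have desc: "i \<le> k \<Longrightarrow> \<exists>B. \<forall>y. F (2*i) (p - 2*i) y = B * norm y ^ (p - 2*i)" for i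
    proof (induction i)
      case 0 thus ?case using A Fp by auto
    next
      case (Suc i)
      then obtain B where B: "\<forall>y. F (2*i) (p - 2*i) y = B * norm y ^ (p - 2*i)" by auto
      define j where "j = k - i - 1"
      have e1: "2*i + (2*j+2) = p" "p - 2*i = 2*j+2" "2*i + 2 = 2 * Suc i" "2*j = p - 2 * Suc i"
        using Suc.prems pk by (auto simp: j_def)
      have "\<forall>y. F (2*i) (2*j+2) y = B * norm y ^ (2*j+2)" using B e1 by simp
      from lap[OF e1(1) this] have "F (2*i+2) (2*j) y = B * (real DIM('a) + 2*j) / (2*j+1) * norm y ^ (2*j)" for y .
      thus ?case unfolding e1 by blast
    qed
    show "\<forall>j<k. R j"
    proof (intro allI impI)
      fix j assume jk: "j < k"
      define i where "i = k - j - 1"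
      have e1: "2*i = p - 2*j - 2" "p - 2*i = 2*j+2" "p - 2*j - 2 + (2*j+2) = p" "p - 2*j - 2 + 2 = p - 2*j"
        using jk pk by (auto simp: i_def)
      obtain B where "\<forall>y. F (2*i) (p - 2*i) y = B * norm y ^ (p - 2*i)" using desc[of i] by (auto simp: i_def)
      hence hB: "\<forall>y. F (p - 2*j - 2) (2*j+2) y = B * norm y ^ (2*j+2)" using e1 by simp
      have lo: "F (p - 2*j) (2*j) y = B * (real DIM('a) + 2*j) / (2*j+1) * norm y ^ (2*j)" for y
        using lap[OF e1(3) hB, of y] e1(4) by simp
      show "R j" unfolding R_def
      proof
        fix y
        show "(d + 2*real j) * F (p-2*j-2) (2*j+2) y = (2*real j+1) * (norm y)^2 * F (p-2*j) (2*j) y"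
        proof -
          have l2: "(2*real j+1) * F (p-2*j) (2*j) y = B * (real DIM('a) + 2*j) * norm y ^ (2*j)"
            using lo[of y] by (simp add: field_simps)
          have "(2*real j+1) * (norm y)^2 * F (p-2*j) (2*j) y = (norm y)^2 * ((2*real j+1) * F (p-2*j) (2*j) y)"
            by (simp add: algebra_simps)
          also have "\<dots> = (d + 2*real j) * (B * norm y ^ (2*j+2))"
            unfolding l2 d_def by (simp add: power_add algebra_simps power2_eq_square)
          also have "\<dots> = (d + 2*real j) * F (p-2*j-2) (2*j+2) y" using hB by simp
          finally show ?thesis by simp
        qed
      qed
    qed
  qed
  with ineq eqR show ?thesis by simp
qed

end
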